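(* Let $G=(X,Y,E)$ be a bipartite graph with non-negative weights $\omega_e$ on its edges $e\in E$ and positive integer weights $s_x$ on its vertices $x\in X$ such that $\sum_{x\in X}s_x\ge|E|$. Suppose that for all $x\in X$ and all $y\in Y$, $$\sum_{e\in\delta_G(x)}\omega_e>\frac{s_x-1}{|Y|}\qquad\text{and}\qquad\sum_{e\in\delta_G(y)}\omega_e=\frac{1}{|Y|}.$$ Then every vertex $x\in X$ has degree exactly $s_x$ in $G$.
   Context: $\delta_G(z)$ denotes the set of edges of $G$ incident to the vertex $z$. *)

theory Defs
  imports Complex_Main
begin

text \<open>A bipartite graph G = (X, Y, E) with sides X, Y is represented by an edge set
  E \<subseteq> X \<times> Y; an edge (x, y) joins x \<in> X and y \<in> Y.
  delta_G(z): the set of edges incident to z.\<close>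

definition deltaX :: "('a \<times> 'b) set \<Rightarrow> 'a \<Rightarrow> ('a \<times> 'b) set" where
  "deltaX E x = {e \<in> E. fst e = x}"

definition deltaY :: "('a \<times> 'b) set \<Rightarrow> 'b \<Rightarrow> ('a \<times> 'b) set" where
  "deltaY E y = {e \<in> E. snd e = y}"

end

theory Submission
  imports Defs
begin

theorem lemma2p8:
  fixes X :: "'a set" and Y :: "'b set" and E :: "('a \<times> 'b) set"
    and \<omega> :: "'a \<times> 'b \<Rightarrow> real" and s :: "'a \<Rightarrow> nat"
  assumes "finite X" and "finite Y" and "E \<subseteq> X \<times> Y"
    and "\<forall>e\<in>E. \<omega> e \<ge> 0"
    and "\<forall>x\<in>X. s x > 0"
    and "(\<Sum>x\<in>X. s x) \<ge> card E"
    and "\<forall>x\<in>X. (\<Sum>e\<in>deltaX E x. \<omega> e) > (real (s x) - 1) / real (card Y)"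
    and "\<forall>y\<in>Y. (\<Sum>e\<in>deltaY E y. \<omega> e) = 1 / real (card Y)"
  shows "\<forall>x\<in>X. card (deltaX E x) = s x"
proof -
  have finE: "finite E" using assms(1,2,3) finite_subset by blast
  have edge: "\<omega> e \<le> 1 / real (card Y)" if "e \<in> E" for e
  proof -
    have y: "snd e \<in> Y" using that assms(3) by auto
    have fin: "finite (deltaY E (snd e))" using finE unfolding deltaY_def by auto
    have "e \<in> deltaY E (snd e)" using that unfolding deltaY_def by auto
    hence "\<omega> e \<le> (\<Sum>e'\<in>deltaY E (snd e). \<omega> e')"
      using fin assms(4) by (intro member_le_sum) (auto simp: deltaY_def)
    thus ?thesis using assms(8) y by auto
  qed
  have le: "s x \<le> card (deltaX E x)" if x: "x \<in> X" for x
  proof -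
    have fin: "finite (deltaX E x)" using finE unfolding deltaX_def by auto
    have "(\<Sum>e\<in>deltaX E x. \<omega> e) \<le> (\<Sum>e\<in>deltaX E x. 1 / real (card Y))"
      using edge by (intro sum_mono) (auto simp: deltaX_def)
    also have "\<dots> = real (card (deltaX E x)) / real (card Y)" by simp
    finally have a: "(real (s x) - 1) / real (card Y) < real (card (deltaX E x)) / real (card Y)"
      using assms(7) x by auto
    have "card Y > 0" using a by (cases "card Y = 0") auto
    hence "real (s x) - 1 < real (card (deltaX E x))" using a
      by (simp add: divide_less_cancel)
    thus ?thesis by linarith
  qed
  have cardE: "card E = (\<Sum>x\<in>X. card (deltaX E x))"
  proof -
    have "E = (\<Union>x\<in>X. deltaX E x)" using assms(3) by (auto simp: deltaX_def)
    moreover have "card (\<Union>x\<in>X. deltaX E x) = (\<Sum>x\<in>X. card (deltaX E x))"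
      using assms(1) finE by (intro card_UN_disjoint) (auto simp: deltaX_def)
    ultimately show ?thesis by simp
  qed
  show ?thesis
  proof (rule ccontr)
    assume "\<not> ?thesis"
    then obtain x where x: "x \<in> X" "card (deltaX E x) \<noteq> s x" by auto
    hence "s x < card (deltaX E x)" using le by force
    hence "(\<Sum>x\<in>X. s x) < (\<Sum>x\<in>X. card (deltaX E x))"
      using le x assms(1) by (intro sum_strict_mono_ex1) auto
    thus False using cardE assms(6) by simp
  qed
qed

end
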